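(* Let $n\in\mathbb{N}_+$ and suppose $X\sim\mathsf{Poi}(\lambda_1)$ or $X\sim\mathsf{B}(n,\frac{\lambda_1}{n})$, where $0\le\lambda_1\le n$. There exist universal constants $M_1>0$, $M_2>0$ (not depending on $\lambda_1,\lambda_2,n$) such that: (1) if $0\le\lambda_2\le n$ and $\lambda_2\ge\lambda_1$, then $(\lambda_2-\lambda_1)P(X\ge\lambda_2)\le M_1\,(\lambda_2\wedge\sqrt{\lambda_2})$; (2) if $\lambda_1\ge\lambda_2\ge1$, then $(\lambda_1-\lambda_2)P(X\le\lambda_2)\le M_2\sqrt{\lambda_2}$.
   Context: $\mathsf{Poi}(\lambda)$ is the Poisson distribution with mean $\lambda$, $\mathsf{B}(n,p)$ the binomial distribution; $a\wedge b=\min\{a,b\}$. *)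

theory Defs
  imports "HOL-Probability.Probability"
begin

text \<open>Poisson distribution Poi(lambda) for lambda >= 0. The library's poisson_pmf
  is only meaningful for rate > 0; Poi(0) is the point mass at 0.\<close>
definition poi_pmf :: "real \<Rightarrow> nat pmf" where
  "poi_pmf l = (if l = 0 then return_pmf 0 else poisson_pmf l)"

end

theory Submission
  imports Defs
begin

lemma binom_var:
  assumes p: "0 \<le> p" "p \<le> 1"
  shows "(\<integral>\<^sup>+k. ennreal ((real k - c)^2) \<partial>binomial_pmf n p)
     = ennreal (real n * p * (1 - p) + (real n * p - c)^2)"
proof (induction n arbitrary: c)
  case 0
  then show ?case using p by (simp add: binomial_pmf_0)
next
  case (Suc n)
  have pp: "p \<in> {0..1}" using p by auto
  have inner: "(\<integral>\<^sup>+k. ennreal ((real ((if b then 1 else 0) + k) - c)^2) \<partial>binomial_pmf n p)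
     = ennreal (real n * p * (1 - p) + (real n * p - (c - (if b then 1 else 0)))^2)" for b
    using Suc.IH[of "c - (if b then 1 else 0)"] by (cases b) (simp_all add: algebra_simps)
  have "(\<integral>\<^sup>+k. ennreal ((real k - c)^2) \<partial>binomial_pmf (Suc n) p)
     = (\<integral>\<^sup>+b. ennreal (real n * p * (1 - p) + (real n * p - (c - (if b then 1 else 0)))^2) \<partial>bernoulli_pmf p)"
    by (simp add: binomial_pmf_Suc[OF pp] inner del: of_nat_add)
  also have "\<dots> = ennreal (real n * p * (1 - p) + (real n * p - (c - 1))^2) * ennreal p
     + ennreal (real n * p * (1 - p) + (real n * p - c)^2) * ennreal (1 - p)"
    using p by (subst nn_integral_bernoulli_pmf) auto
  also have "\<dots> = ennreal ((real n * p * (1 - p) + (real n * p - (c - 1))^2) * p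
     + (real n * p * (1 - p) + (real n * p - c)^2) * (1 - p))"
    using p by (simp add: ennreal_mult'' ennreal_plus mult_nonneg_nonneg)
  also have "\<dots> = ennreal (real (Suc n) * p * (1 - p) + (real (Suc n) * p - c)^2)"
    by (simp add: algebra_simps power2_eq_square)
  finally show ?case .
qed

lemma poi_sums:
  fixes l :: real
  shows "(\<lambda>k. l^k / fact k * exp (-l) * (real k - l)^2) sums l"
proof -
  define a where "a = (\<lambda>k::nat. l^k / fact k)"
  have s0: "a sums exp l" unfolding a_def using exp_converges[of l] by (simp add: divide_inverse mult.commute)
  have s1: "(\<lambda>k. real k * a k) sums (l * exp l)"
  proof -
    have "(\<lambda>m. real (Suc m) * a (Suc m)) = (\<lambda>m. l * a m)"
    proof
      fix m
      have f: "(fact (Suc m) :: real) = real (Suc m) * fact m" by simp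
      have "(fact m :: real) \<noteq> 0" by simp
      then show "real (Suc m) * a (Suc m) = l * a m"
        unfolding a_def f by (simp del: of_nat_Suc fact_Suc)
    qed
    hence "(\<lambda>m. real (Suc m) * a (Suc m)) sums (l * exp l)" using sums_mult[OF s0, of l] by simp
    thus ?thesis by (subst (asm) sums_Suc_iff) simp
  qed
  have s2: "(\<lambda>k. real k * (real k - 1) * a k) sums (l * (l * exp l))"
  proof -
    have "(\<lambda>m. real (Suc m) * (real (Suc m) - 1) * a (Suc m)) = (\<lambda>m. l * (real m * a m))"
    proof
      fix m
      have f: "(fact (Suc m) :: real) = real (Suc m) * fact m" by simp
      have "(fact m :: real) \<noteq> 0" by simp
      then show "real (Suc m) * (real (Suc m) - 1) * a (Suc m) = l * (real m * a m)"
        unfolding a_def f by (simp del: of_nat_Suc fact_Suc)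
    qed
    hence "(\<lambda>m. real (Suc m) * (real (Suc m) - 1) * a (Suc m)) sums (l * (l * exp l))"
      using sums_mult[OF s1, of l] by simp
    thus ?thesis by (subst (asm) sums_Suc_iff) simp
  qed
  have "(\<lambda>k. (real k * (real k - 1) * a k + (1 - 2*l) * (real k * a k) + l^2 * a k) * exp (-l))
      sums ((l * (l * exp l) + (1 - 2*l) * (l * exp l) + l^2 * exp l) * exp (-l))"
    by (intro sums_mult2 sums_add sums_mult s0 s1 s2)
  moreover have "(l * (l * exp l) + (1 - 2*l) * (l * exp l) + l^2 * exp l) * exp (-l) = l"
    by (simp add: algebra_simps power2_eq_square exp_minus)
  moreover have "(\<lambda>k. (real k * (real k - 1) * a k + (1 - 2*l) * (real k * a k) + l^2 * a k) * exp (-l))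
      = (\<lambda>k. l^k / fact k * exp (-l) * (real k - l)^2)"
    by (rule ext) (simp add: a_def field_simps power2_eq_square)
  ultimately show ?thesis by simp
qed

lemma poi_var:
  assumes "0 < l"
  shows "(\<integral>\<^sup>+k. ennreal ((real k - l)^2) \<partial>poisson_pmf l) = ennreal l"
proof -
  have "(\<integral>\<^sup>+k. ennreal ((real k - l)^2) \<partial>poisson_pmf l)
      = (\<integral>\<^sup>+k. ennreal (l^k / fact k * exp (-l) * (real k - l)^2) \<partial>count_space UNIV)"
    using assms by (simp add: nn_integral_measure_pmf ennreal_mult'' [symmetric])
  also have "\<dots> = (\<Sum>k. ennreal (l^k / fact k * exp (-l) * (real k - l)^2))"
    by (rule nn_integral_count_space_nat)
  also have "\<dots> = ennreal l"
    using poi_sums[of l] assms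
    by (subst suminf_ennreal2) (auto simp: sums_iff)
  finally show ?thesis .
qed

lemma cheb:
  fixes D :: "nat pmf"
  assumes V: "(\<integral>\<^sup>+k. ennreal ((real k - l)^2) \<partial>D) \<le> ennreal l" and d: "d > 0" and l: "l \<ge> 0"
  shows "d^2 * measure_pmf.prob D {k. d \<le> \<bar>real k - l\<bar>} \<le> l"
proof -
  let ?S = "{k. d \<le> \<bar>real k - l\<bar>}"
  have "ennreal (d^2 * measure_pmf.prob D ?S) = ennreal (d^2) * emeasure D ?S"
    by (simp add: measure_pmf.emeasure_eq_measure ennreal_mult'')
  also have "\<dots> = (\<integral>\<^sup>+k. ennreal (d^2) * indicator ?S k \<partial>D)"
    by (simp add: nn_integral_cmult_indicator)
  also have "\<dots> \<le> (\<integral>\<^sup>+k. ennreal ((real k - l)^2) \<partial>D)"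
  proof (intro nn_integral_mono)
    fix k
    show "ennreal (d^2) * indicator ?S k \<le> ennreal ((real k - l)^2)"
    proof (cases "k \<in> ?S")
      case True
      hence "d^2 \<le> (real k - l)^2" using d
        by (metis abs_le_square_iff abs_of_pos mem_Collect_eq)
      thus ?thesis using True by simp
    qed simp
  qed
  also have "\<dots> \<le> ennreal l" by (rule V)
  finally show ?thesis using l by (simp add: ennreal_le_iff)
qed


lemma var_bound:
  assumes "n \<ge> 1" "0 \<le> l" "l \<le> real n"
    and D: "D = poi_pmf l \<or> D = binomial_pmf n (l / real n)"
  shows "(\<integral>\<^sup>+k. ennreal ((real k - l)^2) \<partial>D) \<le> ennreal l"
  using D
proof
  assume D: "D = poi_pmf l"
  show ?thesis
  proof (cases "l = 0")
    case True thus ?thesis using D by (simp add: poi_pmf_def)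
  next
    case False thus ?thesis using D assms(2) by (simp add: poi_pmf_def poi_var)
  qed
next
  assume D: "D = binomial_pmf n (l / real n)"
  have n0: "real n > 0" using assms by simp
  have p: "0 \<le> l / real n" "l / real n \<le> 1" using assms n0 by auto
  have e: "real n * (l / real n) = l" using n0 by simp
  have "(\<integral>\<^sup>+k. ennreal ((real k - l)^2) \<partial>D) = ennreal (l * (1 - l / real n))"
    using binom_var[OF p, where c=l and n=n] D e by simp
  also have "\<dots> \<le> ennreal l"
    using p assms(2) by (intro ennreal_leI) (simp add: mult_left_le)
  finally show ?thesis .
qed

lemma part1:
  fixes l1 l2 d P :: real
  assumes "0 \<le> l1" "l1 \<le> l2" "0 \<le> P" "P \<le> 1"
    and ch: "l2 - l1 > 0 \<Longrightarrow> (l2 - l1)^2 * P \<le> l1"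
  shows "(l2 - l1) * P \<le> 1 * min l2 (sqrt l2)"
proof -
  define d where "d = l2 - l1"
  have d0: "d \<ge> 0" using assms d_def by simp
  have a: "d * P \<le> l2" using assms d0 mult_left_le[of P d] unfolding d_def by linarith
  have b: "d * P \<le> sqrt l2"
  proof (cases "d \<le> sqrt l1")
    case True
    have "d * P \<le> d" using d0 assms mult_left_le by blast
    also have "\<dots> \<le> sqrt l1" by fact
    also have "\<dots> \<le> sqrt l2" using assms by simp
    finally show ?thesis .
  next
    case False
    hence dpos: "d > 0" using assms(1) real_sqrt_ge_zero[of l1] by linarith
    have c: "d^2 * P \<le> l1" using ch dpos d_def by simp
    have "d * (d * P) \<le> d * sqrt l1"
    proof -
      have "d * (d * P) \<le> l1" using c by (simp add: power2_eq_square mult.assoc)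
      also have "l1 = sqrt l1 * sqrt l1" using assms by simp
      also have "\<dots> \<le> d * sqrt l1" using False assms(1) by (intro mult_right_mono) auto
      finally show ?thesis .
    qed
    hence "d * P \<le> sqrt l1" using dpos by simp
    also have "\<dots> \<le> sqrt l2" using assms by simp
    finally show ?thesis .
  qed
  show ?thesis using a b d_def by simp
qed

lemma part2:
  fixes l1 l2 P :: real
  assumes "1 \<le> l2" "l2 \<le> l1" "0 \<le> P" "P \<le> 1"
    and ch: "l1 - l2 > 0 \<Longrightarrow> (l1 - l2)^2 * P \<le> l1"
  shows "(l1 - l2) * P \<le> 2 * sqrt l2"
proof -
  define d where "d = l1 - l2"
  have d0: "d \<ge> 0" using assms d_def by simp
  have s1: "1 \<le> sqrt l2" using assms by simp
  show ?thesis
  proof (cases "d \<le> sqrt l2")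
    case True
    have "d * P \<le> d" using d0 assms mult_left_le by blast
    hence "d * P \<le> 2 * sqrt l2" using True s1 by linarith
    thus ?thesis by (simp add: d_def)
  next
    case False
    hence dpos: "d > 0" using s1 by linarith
    have "d * (d * P) \<le> l2 + d" using ch dpos d_def by (simp add: power2_eq_square mult.assoc)
    also have "l2 = sqrt l2 * sqrt l2" using assms by simp
    also have "sqrt l2 * sqrt l2 + d \<le> d * sqrt l2 + d * sqrt l2"
      using False s1 dpos by (intro add_mono mult_right_mono) (auto simp: mult_left_le)
    finally have "d * (d * P) \<le> d * (2 * sqrt l2)" by simp
    hence "d * P \<le> 2 * sqrt l2" using dpos by simp
    thus ?thesis using d_def by simp
  qed
qed

theorem lemma7:
  "\<exists>M1>0. \<exists>M2>0. \<forall>(n::nat) (l1::real) (l2::real) (D::nat pmf).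
     n \<ge> 1 \<and> 0 \<le> l1 \<and> l1 \<le> real n \<and>
     (D = poi_pmf l1 \<or> D = binomial_pmf n (l1 / real n)) \<longrightarrow>
       ((0 \<le> l2 \<and> l2 \<le> real n \<and> l1 \<le> l2 \<longrightarrow>
          (l2 - l1) * measure_pmf.prob D {k. real k \<ge> l2} \<le> M1 * min l2 (sqrt l2)) \<and>
        (l1 \<ge> l2 \<and> l2 \<ge> 1 \<longrightarrow>
          (l1 - l2) * measure_pmf.prob D {k. real k \<le> l2} \<le> M2 * sqrt l2))"
proof -
  have main: "\<forall>(n::nat) (l1::real) (l2::real) (D::nat pmf).
     n \<ge> 1 \<and> 0 \<le> l1 \<and> l1 \<le> real n \<and>
     (D = poi_pmf l1 \<or> D = binomial_pmf n (l1 / real n)) \<longrightarrow>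
       ((0 \<le> l2 \<and> l2 \<le> real n \<and> l1 \<le> l2 \<longrightarrow>
          (l2 - l1) * measure_pmf.prob D {k. real k \<ge> l2} \<le> 1 * min l2 (sqrt l2)) \<and>
        (l1 \<ge> l2 \<and> l2 \<ge> 1 \<longrightarrow>
          (l1 - l2) * measure_pmf.prob D {k. real k \<le> l2} \<le> 2 * sqrt l2))"
  proof (intro allI impI)
  fix n :: nat and l1 l2 :: real and D :: "nat pmf"
  assume H: "n \<ge> 1 \<and> 0 \<le> l1 \<and> l1 \<le> real n \<and>
     (D = poi_pmf l1 \<or> D = binomial_pmf n (l1 / real n))"
  hence h: "1 \<le> n" "0 \<le> l1" "l1 \<le> real n" "D = poi_pmf l1 \<or> D = binomial_pmf n (l1 / real n)"
    by auto
  have V: "(\<integral>\<^sup>+k. ennreal ((real k - l1)^2) \<partial>D) \<le> ennreal l1" using var_bound[OF h] .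
  show "(0 \<le> l2 \<and> l2 \<le> real n \<and> l1 \<le> l2 \<longrightarrow>
          (l2 - l1) * measure_pmf.prob D {k. real k \<ge> l2} \<le> 1 * min l2 (sqrt l2)) \<and>
        (l1 \<ge> l2 \<and> l2 \<ge> 1 \<longrightarrow>
          (l1 - l2) * measure_pmf.prob D {k. real k \<le> l2} \<le> 2 * sqrt l2)"
  proof (intro conjI impI)
    assume "0 \<le> l2 \<and> l2 \<le> real n \<and> l1 \<le> l2"
    hence "l1 \<le> l2" by simp
    show "(l2 - l1) * measure_pmf.prob D {k. real k \<ge> l2} \<le> 1 * min l2 (sqrt l2)"
    proof (rule part1)
      assume dp: "l2 - l1 > 0"
      have "measure_pmf.prob D {k. real k \<ge> l2} \<le> measure_pmf.prob D {k. l2 - l1 \<le> \<bar>real k - l1\<bar>}"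
        by (intro measure_pmf.finite_measure_mono) auto
      hence "(l2 - l1)^2 * measure_pmf.prob D {k. real k \<ge> l2}
          \<le> (l2 - l1)^2 * measure_pmf.prob D {k. l2 - l1 \<le> \<bar>real k - l1\<bar>}"
        by (intro mult_left_mono) auto
      also have "\<dots> \<le> l1" by (rule cheb[OF V dp h(2)])
      finally show "(l2 - l1)^2 * measure_pmf.prob D {k. real k \<ge> l2} \<le> l1" .
    qed (use \<open>l1 \<le> l2\<close> h in auto)
  next
    assume "l2 \<le> l1 \<and> 1 \<le> l2"
    hence "l2 \<le> l1" "1 \<le> l2" by auto
    show "(l1 - l2) * measure_pmf.prob D {k. real k \<le> l2} \<le> 2 * sqrt l2"
    proof (rule part2)
      assume dp: "l1 - l2 > 0"
      have "measure_pmf.prob D {k. real k \<le> l2} \<le> measure_pmf.prob D {k. l1 - l2 \<le> \<bar>real k - l1\<bar>}"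
        by (intro measure_pmf.finite_measure_mono) auto
      hence "(l1 - l2)^2 * measure_pmf.prob D {k. real k \<le> l2}
          \<le> (l1 - l2)^2 * measure_pmf.prob D {k. l1 - l2 \<le> \<bar>real k - l1\<bar>}"
        by (intro mult_left_mono) auto
      also have "\<dots> \<le> l1" by (rule cheb[OF V dp h(2)])
      finally show "(l1 - l2)^2 * measure_pmf.prob D {k. real k \<le> l2} \<le> l1" .
    qed (use \<open>l2 \<le> l1\<close> \<open>1 \<le> l2\<close> in auto)
  qed
  qed
  show ?thesis
    by (rule exI[of _ 1], rule conjI, simp, rule exI[of _ 2], rule conjI, simp, rule main)
qed

end
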